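(* Let $G$ be a connected Lie group. The map $f:H^*(G)\to T(H^*(BG)[1])$ defined by $f(U_{i_1}\cdots U_{i_j})=P_{i_1}\sqcup\!\sqcup\cdots\sqcup\!\sqcup P_{i_j}$ (in particular $f(U_i)=P_i$ and $f(U_{i_1}U_{i_2})=P_{i_1}\otimes P_{i_2}+P_{i_2}\otimes P_{i_1}$) is a map of differential graded coalgebras, and therefore a map of differential graded Hopf algebras.
   Context: Rational coefficients. $H^*(BG)$ is a polynomial algebra on even-degree generators $P_i$, and $H^*(G)$ is the exterior algebra on odd-degree primitive generators $U_i$ with $|U_i|=|P_i|-1$, with zero differential and coproduct induced by the group multiplication (an algebra map with $U_i$ primitive). $T(H^*(BG)[1])$ has the deconcatenation coproduct $\Delta(P_{i_1}\otimes\cdots\otimes P_{i_k})=\sum_jP_{i_1}\otimes\cdots\otimes P_{i_j}\bigotimes P_{i_{j+1}}\otimes\cdots\otimes P_{i_k}$, the shuffle product $\sqcup\!\sqcup$, and the bar differential $\delta$ induced by the product of $H^*(BG)$ (a derivation for the shuffle product, vanishing on each $P_i$). *)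

theory Defs
  imports Complex_Main "HOL-Library.Poly_Mapping" "HOL-Library.Multiset"
begin

text \<open>Rational vector spaces with a distinguished basis are modelled as finitely
supported functions from the basis to the rationals.

 H^*(BG) = Q[P_0,...,P_(n-1)], deg P_i = d i (even, positive).  A monomial is a
 multiset of generator indices; monomial product = multiset sum.

 T(H^*(BG)[1]) (reduced: tensor words of monomials of positive degree):
 basis = lists of nonempty monomials; the shifted degree of a monomial m is deg m - 1.

 H^*(G) = exterior algebra on U_0,...,U_(n-1), deg U_i = d i - 1 (odd):
 basis = finite sets S of indices, S standing for U_(i1) ... U_(ik) with i1 < ... < ik.\<close>

type_synonym mono = "nat multiset"
type_synonym word = "mono list"

definition cmul :: "rat \<Rightarrow> ('a \<Rightarrow>\<^sub>0 rat) \<Rightarrow> ('a \<Rightarrow>\<^sub>0 rat)" where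
  "cmul c p = Poly_Mapping.map (\<lambda>x. c * x) p"

definition lin :: "('a \<Rightarrow> ('b \<Rightarrow>\<^sub>0 rat)) \<Rightarrow> ('a \<Rightarrow>\<^sub>0 rat) \<Rightarrow> ('b \<Rightarrow>\<^sub>0 rat)" where
  "lin g p = (\<Sum>k\<in>Poly_Mapping.keys p. cmul (Poly_Mapping.lookup p k) (g k))"

definition lin2 :: "('a \<Rightarrow> 'b \<Rightarrow> ('c \<Rightarrow>\<^sub>0 rat)) \<Rightarrow> ('a \<Rightarrow>\<^sub>0 rat) \<Rightarrow> ('b \<Rightarrow>\<^sub>0 rat) \<Rightarrow> ('c \<Rightarrow>\<^sub>0 rat)" where
  "lin2 g p q = (\<Sum>a\<in>Poly_Mapping.keys p. \<Sum>b\<in>Poly_Mapping.keys q.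
      cmul (Poly_Mapping.lookup p a * Poly_Mapping.lookup q b) (g a b))"

definition tens :: "('a \<Rightarrow>\<^sub>0 rat) \<Rightarrow> ('b \<Rightarrow>\<^sub>0 rat) \<Rightarrow> (('a \<times> 'b) \<Rightarrow>\<^sub>0 rat)" where
  "tens p q = lin2 (\<lambda>a b. Poly_Mapping.single (a, b) 1) p q"

definition ks :: "nat \<Rightarrow> nat \<Rightarrow> rat" where
  "ks a b = (if even (a * b) then 1 else -1)"

definition mdeg :: "(nat \<Rightarrow> nat) \<Rightarrow> mono \<Rightarrow> nat" where
  "mdeg d m = (\<Sum>i\<in>#m. d i)"

definition sdeg :: "(nat \<Rightarrow> nat) \<Rightarrow> mono \<Rightarrow> nat" where
  "sdeg d m = mdeg d m - 1"

definition wdeg :: "(nat \<Rightarrow> nat) \<Rightarrow> word \<Rightarrow> nat" where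
  "wdeg d w = sum_list (map (sdeg d) w)"

definition edeg :: "(nat \<Rightarrow> nat) \<Rightarrow> nat set \<Rightarrow> nat" where
  "edeg d S = (\<Sum>i\<in>S. d i - 1)"

definition prepend :: "mono \<Rightarrow> (word \<Rightarrow>\<^sub>0 rat) \<Rightarrow> (word \<Rightarrow>\<^sub>0 rat)" where
  "prepend x p = lin (\<lambda>w. Poly_Mapping.single (x # w) 1) p"

fun shw :: "(nat \<Rightarrow> nat) \<Rightarrow> word \<Rightarrow> word \<Rightarrow> (word \<Rightarrow>\<^sub>0 rat)" where
  "shw d [] ys = Poly_Mapping.single ys 1"
| "shw d (x # xs) [] = Poly_Mapping.single (x # xs) 1"
| "shw d (x # xs) (y # ys) =
     prepend x (shw d xs (y # ys))
     + cmul (ks (sdeg d y) (sdeg d x + wdeg d xs)) (prepend y (shw d (x # xs) ys))"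

definition shuffle :: "(nat \<Rightarrow> nat) \<Rightarrow> (word \<Rightarrow>\<^sub>0 rat) \<Rightarrow> (word \<Rightarrow>\<^sub>0 rat) \<Rightarrow> (word \<Rightarrow>\<^sub>0 rat)" where
  "shuffle d p q = lin2 (shw d) p q"

definition deconc :: "(word \<Rightarrow>\<^sub>0 rat) \<Rightarrow> ((word \<times> word) \<Rightarrow>\<^sub>0 rat)" where
  "deconc p = lin (\<lambda>w. \<Sum>j\<in>{0..length w}. Poly_Mapping.single (take j w, drop j w) 1) p"

definition epsT :: "(word \<Rightarrow>\<^sub>0 rat) \<Rightarrow> rat" where
  "epsT p = Poly_Mapping.lookup p []"

definition barw :: "(nat \<Rightarrow> nat) \<Rightarrow> word \<Rightarrow> (word \<Rightarrow>\<^sub>0 rat)" where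
  "barw d w = (\<Sum>j<length w - 1.
      cmul (if even (wdeg d (take (Suc j) w)) then 1 else -1)
        (Poly_Mapping.single (take j w @ [w ! j + w ! Suc j] @ drop (Suc (Suc j)) w) 1))"

definition bar :: "(nat \<Rightarrow> nat) \<Rightarrow> (word \<Rightarrow>\<^sub>0 rat) \<Rightarrow> (word \<Rightarrow>\<^sub>0 rat)" where
  "bar d p = lin (barw d) p"

text \<open>product of basis monomials U_A U_B (all generators odd)\<close>
definition wedgeb :: "nat set \<Rightarrow> nat set \<Rightarrow> (nat set \<Rightarrow>\<^sub>0 rat)" where
  "wedgeb A B = (if A \<inter> B \<noteq> {} then 0 else
     Poly_Mapping.single (A \<union> B)
       (if even (card {(a, b). a \<in> A \<and> b \<in> B \<and> b < a}) then 1 else -1))"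

definition wedge :: "(nat set \<Rightarrow>\<^sub>0 rat) \<Rightarrow> (nat set \<Rightarrow>\<^sub>0 rat) \<Rightarrow> (nat set \<Rightarrow>\<^sub>0 rat)" where
  "wedge p q = lin2 wedgeb p q"

definition tmul :: "(nat \<Rightarrow> nat) \<Rightarrow> ((nat set \<times> nat set) \<Rightarrow>\<^sub>0 rat) \<Rightarrow> ((nat set \<times> nat set) \<Rightarrow>\<^sub>0 rat)
                     \<Rightarrow> ((nat set \<times> nat set) \<Rightarrow>\<^sub>0 rat)" where
  "tmul d p q = lin2 (\<lambda>(A, B) (C, E). cmul (ks (edeg d B) (edeg d C)) (tens (wedgeb A C) (wedgeb B E))) p q"

text \<open>coproduct: the algebra map with U_i primitive, i.e.
  Delta(U_(i1) ... U_(ik)) = prod_j (U_(ij) (x) 1 + 1 (x) U_(ij))\<close>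
definition coHb :: "(nat \<Rightarrow> nat) \<Rightarrow> nat set \<Rightarrow> ((nat set \<times> nat set) \<Rightarrow>\<^sub>0 rat)" where
  "coHb d S = foldr (\<lambda>i acc. tmul d (Poly_Mapping.single ({i}, {}) 1 + Poly_Mapping.single ({}, {i}) 1) acc)
                (sorted_list_of_set S) (Poly_Mapping.single ({}, {}) 1)"

definition coH :: "(nat \<Rightarrow> nat) \<Rightarrow> (nat set \<Rightarrow>\<^sub>0 rat) \<Rightarrow> ((nat set \<times> nat set) \<Rightarrow>\<^sub>0 rat)" where
  "coH d p = lin (coHb d) p"

definition epsH :: "(nat set \<Rightarrow>\<^sub>0 rat) \<Rightarrow> rat" where
  "epsH p = Poly_Mapping.lookup p {}"

definition dH :: "(nat set \<Rightarrow>\<^sub>0 rat) \<Rightarrow> (nat set \<Rightarrow>\<^sub>0 rat)" where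
  "dH p = 0"

definition fb :: "(nat \<Rightarrow> nat) \<Rightarrow> nat set \<Rightarrow> (word \<Rightarrow>\<^sub>0 rat)" where
  "fb d S = foldr (\<lambda>i acc. shuffle d (Poly_Mapping.single [{#i#}] 1) acc)
              (sorted_list_of_set S) (Poly_Mapping.single [] 1)"

definition fmap :: "(nat \<Rightarrow> nat) \<Rightarrow> (nat set \<Rightarrow>\<^sub>0 rat) \<Rightarrow> (word \<Rightarrow>\<^sub>0 rat)" where
  "fmap d p = lin (fb d) p"

definition ftens :: "(nat \<Rightarrow> nat) \<Rightarrow> ((nat set \<times> nat set) \<Rightarrow>\<^sub>0 rat) \<Rightarrow> ((word \<times> word) \<Rightarrow>\<^sub>0 rat)" where
  "ftens d p = lin (\<lambda>(A, B). tens (fb d A) (fb d B)) p"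

end

theory Submission
  imports Defs
begin


lemma lookup_cmul[simp]: "Poly_Mapping.lookup (cmul c p) k = c * Poly_Mapping.lookup p k"
  by (simp add: cmul_def Poly_Mapping.map.rep_eq when_def)

lemma cmul_add: "cmul c (p + q) = cmul c p + cmul c q"
  by (rule poly_mapping_eqI) (simp add: lookup_add algebra_simps)
lemma cmul_add2: "cmul (a + b) p = cmul a p + cmul b p"
  by (rule poly_mapping_eqI) (simp add: lookup_add algebra_simps)
lemma cmul_cmul[simp]: "cmul a (cmul b p) = cmul (a * b) p"
  by (rule poly_mapping_eqI) simp
lemma cmul_1[simp]: "cmul 1 p = p"
  by (rule poly_mapping_eqI) simp
lemma cmul_0[simp]: "cmul 0 p = 0"
  by (rule poly_mapping_eqI) simp
lemma cmul_zero[simp]: "cmul c 0 = 0"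
  by (rule poly_mapping_eqI) simp
lemma cmul_single[simp]: "cmul c (Poly_Mapping.single k a) = Poly_Mapping.single k (c * a)"
  by (rule poly_mapping_eqI) (simp add: lookup_single when_def)
lemma cmul_sum: "cmul c (sum f A) = (\<Sum>a\<in>A. cmul c (f a))"
  by (rule poly_mapping_eqI) (simp add: lookup_sum sum_distrib_left)
lemma cmul_neg1: "cmul (-1) p = - p"
  by (rule poly_mapping_eqI) simp

lemma lin_alt: "finite K \<Longrightarrow> Poly_Mapping.keys p \<subseteq> K \<Longrightarrow>
   lin g p = (\<Sum>k\<in>K. cmul (Poly_Mapping.lookup p k) (g k))"
  unfolding lin_def
  by (rule sum.mono_neutral_left) (auto simp: in_keys_iff)

lemma lin_add: "lin g (p + q) = lin g p + lin g q"
proof -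
  let ?K = "Poly_Mapping.keys p \<union> Poly_Mapping.keys q"
  have "lin g (p+q) = (\<Sum>k\<in>?K. cmul (Poly_Mapping.lookup (p+q) k) (g k))"
    by (rule lin_alt) (auto simp: keys_add)
  also have "\<dots> = (\<Sum>k\<in>?K. cmul (Poly_Mapping.lookup p k) (g k)) + (\<Sum>k\<in>?K. cmul (Poly_Mapping.lookup q k) (g k))"
    by (simp add: lookup_add cmul_add2 sum.distrib)
  also have "\<dots> = lin g p + lin g q"
    by (subst (1 2) lin_alt[symmetric]) auto
  finally show ?thesis .
qed

lemma lin_zero[simp]: "lin g 0 = 0" by (simp add: lin_def)

lemma lin_cmul: "lin g (cmul c p) = cmul c (lin g p)"
proof -
  have "lin g (cmul c p) = (\<Sum>k\<in>Poly_Mapping.keys p. cmul (Poly_Mapping.lookup (cmul c p) k) (g k))"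
    by (rule lin_alt) (auto simp: in_keys_iff)
  then show ?thesis by (simp add: lin_def cmul_sum)
qed

lemma lin_single[simp]: "lin g (Poly_Mapping.single k c) = cmul c (g k)"
  by (cases "c = 0") (auto simp: lin_def)

lemma lin_sum: "lin g (sum f A) = (\<Sum>a\<in>A. lin g (f a))"
  by (induction A rule: infinite_finite_induct) (auto simp: lin_add)

lemma lin_sum_single: "lin g (\<Sum>u\<in>U. Poly_Mapping.single (h u) (c u)) = (\<Sum>u\<in>U. cmul (c u) (g (h u)))"
  by (simp add: lin_sum)

lemma lin_cong: "(\<And>k. k \<in> Poly_Mapping.keys p \<Longrightarrow> g k = g' k) \<Longrightarrow> lin g p = lin g' p"
  by (simp add: lin_def)

lemma lin_comp: "lin h (lin g p) = lin (\<lambda>k. lin h (g k)) p"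
  by (simp only: lin_def[of g p] lin_def[of "\<lambda>k. lin h (g k)" p] lin_sum lin_cmul)

lemma lin_lin_zero: "(\<And>k. k \<in> Poly_Mapping.keys p \<Longrightarrow> g k = 0) \<Longrightarrow> lin g p = 0"
  by (simp add: lin_def)

lemma lin2_lin: "lin2 g p q = lin (\<lambda>a. lin (g a) q) p"
  by (simp add: lin2_def lin_def cmul_sum mult.commute)

lemma lin2_lin': "lin2 g p q = lin (\<lambda>b. lin (\<lambda>a. g a b) p) q"
  unfolding lin2_def lin_def cmul_sum
  by (subst sum.swap) (simp add: mult.commute)

lemma lookup_lin: "Poly_Mapping.lookup (lin g p) k = (\<Sum>a\<in>Poly_Mapping.keys p. Poly_Mapping.lookup p a * Poly_Mapping.lookup (g a) k)"
  by (simp add: lin_def lookup_sum)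

lemma keys_lin: "Poly_Mapping.keys (lin g p) \<subseteq> (\<Union>a\<in>Poly_Mapping.keys p. Poly_Mapping.keys (g a))"
  unfolding lin_def
  apply (rule order_trans[OF keys_sum])
  apply (auto simp: in_keys_iff)
  done


definition L :: "nat list \<Rightarrow> word" where "L w = map (\<lambda>i. {#i#}) w"
definition sg :: "nat \<Rightarrow> rat" where "sg k = (if even k then 1 else -1)"

lemma sg_add: "sg (a + b) = sg a * sg b" by (auto simp: sg_def)
lemma sg_0[simp]: "sg 0 = 1" by (simp add: sg_def)
lemma sg_Suc: "sg (Suc k) = - sg k" by (simp add: sg_def)
lemma sg_mult_self[simp]: "sg k * sg k = 1" by (simp add: sg_def)
lemma sg_even_eq: "even (a + b) \<Longrightarrow> sg a = sg b" by (auto simp: sg_def)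

fun ninv :: "nat list \<Rightarrow> nat" where
  "ninv [] = 0"
| "ninv (x # xs) = length (filter (\<lambda>y. y < x) xs) + ninv xs"

definition E :: "nat list \<Rightarrow> nat list \<Rightarrow> nat" where
  "E u v = sum_list (map (\<lambda>a. length (filter (\<lambda>b. b < a) v)) u)"

lemma E_Nil[simp]: "E [] v = 0" by (simp add: E_def)
lemma E_Cons[simp]: "E (x # u) v = length (filter (\<lambda>b. b < x) v) + E u v" by (simp add: E_def)
lemma E_Cons2: "E u (y # v) = E u v + length (filter (\<lambda>a. y < a) u)"
  by (induction u) auto

lemma inv_append: "ninv (u @ v) = ninv u + ninv v + E u v"
  by (induction u) auto

lemma length_filter_compl2:
  "(\<And>x. x \<in> set u \<Longrightarrow> P x \<longleftrightarrow> \<not> Q x) \<Longrightarrow> length (filter P u) + length (filter Q u) = length u"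
  by (induction u) auto

definition perms :: "nat set \<Rightarrow> nat list set" where
  "perms S = {w. distinct w \<and> set w = S}"

lemma finite_perms[simp]: "finite (perms S)"
proof (cases "finite S")
  case True
  have "perms S \<subseteq> {w. set w \<subseteq> S \<and> length w = card S}"
    by (auto simp: perms_def distinct_card)
  moreover have "finite {w. set w \<subseteq> S \<and> length w = card S}"
    using True by (rule finite_lists_length_eq)
  ultimately show ?thesis by (rule finite_subset)
next
  case False
  then have "perms S = {}" by (auto simp: perms_def)
  then show ?thesis by simp
qed

lemma perms_empty[simp]: "perms {} = {[]}" by (auto simp: perms_def)
lemma perms_single[simp]: "perms {i} = {[i]}"
proof -
  have "w = [i]" if "distinct w" "set w = {i}" for w
  proof -
    have "length w = 1" using distinct_card[OF that(1)] that(2) by simp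
    then obtain x where "w = [x]" by (cases w) auto
    with that(2) show ?thesis by simp
  qed
  then show ?thesis by (auto simp: perms_def)
qed

lemma perms_length: "w \<in> perms S \<Longrightarrow> length w = card S"
  by (auto simp: perms_def distinct_card)

fun merge :: "bool list \<Rightarrow> 'a list \<Rightarrow> 'a list \<Rightarrow> 'a list" where
  "merge [] xs ys = []"
| "merge (True # m) (x # xs) ys = x # merge m xs ys"
| "merge (True # m) [] ys = []"
| "merge (False # m) xs (y # ys) = y # merge m xs ys"
| "merge (False # m) xs [] = []"

definition masks :: "nat \<Rightarrow> nat \<Rightarrow> bool list set" where
  "masks a b = {m. length m = a + b \<and> length (filter id m) = a}"

fun cnt :: "bool list \<Rightarrow> nat" where
  "cnt [] = 0"
| "cnt (True # m) = cnt m"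
| "cnt (False # m) = length (filter id m) + cnt m"

lemma finite_masks[simp]: "finite (masks a b)"
proof -
  have "masks a b \<subseteq> {m. set m \<subseteq> UNIV \<and> length m = a + b}" by (auto simp: masks_def)
  moreover have "finite {m::bool list. set m \<subseteq> UNIV \<and> length m = a + b}"
    by (rule finite_lists_length_eq) simp
  ultimately show ?thesis by (rule finite_subset)
qed

lemma masks_0: "masks 0 b = {replicate b False}"
proof -
  have "\<And>m. length (filter id m) = 0 \<Longrightarrow> m = replicate (length m) False"
  proof -
    fix m :: "bool list" show "length (filter id m) = 0 \<Longrightarrow> m = replicate (length m) False"
      by (induction m) (auto split: if_splits)
  qed
  then show ?thesis by (auto simp: masks_def filter_empty_conv)
qed

lemma masks_0': "masks a 0 = {replicate a True}"
proof -
  have "\<And>m. length (filter id m) = length m \<Longrightarrow> m = replicate (length m) True"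
  proof -
    fix m :: "bool list" show "length (filter id m) = length m \<Longrightarrow> m = replicate (length m) True"
    proof (induction m)
      case (Cons a m) then show ?case using length_filter_le[of "\<lambda>a. a" m] by (cases a) auto
    qed simp
  qed
  then show ?thesis by (auto simp: masks_def)
qed

lemma masks_Suc_Suc: "masks (Suc a) (Suc b) = Cons True ` masks a (Suc b) \<union> Cons False ` masks (Suc a) b"
  (is "?L = ?R")
proof
  show "?R \<subseteq> ?L" by (auto simp: masks_def)
  show "?L \<subseteq> ?R"
  proof
    fix m assume m: "m \<in> ?L"
    then obtain c m' where mc: "m = c # m'" by (cases m) (auto simp: masks_def)
    show "m \<in> ?R"
    proof (cases c)
      case True
      then have "m' \<in> masks a (Suc b)" using m mc by (auto simp: masks_def)
      then show ?thesis using mc True by blast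
    next
      case False
      then have "m' \<in> masks (Suc a) b" using m mc by (auto simp: masks_def)
      then show ?thesis using mc False by blast
    qed
  qed
qed

lemma cnt_replF[simp]: "cnt (replicate b False) = 0" by (induction b) auto
lemma cnt_replT[simp]: "cnt (replicate b True) = 0" by (induction b) auto
lemma merge_replF[simp]: "merge (replicate (length y) False) [] y = y" by (induction y) auto
lemma merge_replT[simp]: "merge (replicate (length x) True) x [] = x" by (induction x) auto

lemma map_merge: "map f (merge m u v) = merge m (map f u) (map f v)"
  by (induction m u v rule: merge.induct) auto

definition wfm :: "bool list \<Rightarrow> 'a list \<Rightarrow> 'b list \<Rightarrow> bool" where
  "wfm m u v \<longleftrightarrow> m \<in> masks (length u) (length v)"

lemma wfm_simps[simp]:
  "wfm [] u v \<longleftrightarrow> u = [] \<and> v = []"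
  "wfm (True # m) (x # u) v \<longleftrightarrow> wfm m u v"
  "wfm (True # m) [] v \<longleftrightarrow> False"
  "wfm (False # m) u (y # v) \<longleftrightarrow> wfm m u v"
  "wfm (False # m) u [] \<longleftrightarrow> False"
  by (auto simp: wfm_def masks_def)
     (metis Suc_n_not_le_n length_filter_le)

lemma mset_merge: "wfm m u v \<Longrightarrow> mset (merge m u v) = mset u + mset v"
  by (induction m u v rule: merge.induct) auto

lemma filter_merge: "wfm m u v \<Longrightarrow> \<forall>x\<in>set u. P x \<Longrightarrow> \<forall>y\<in>set v. \<not> P y \<Longrightarrow> filter P (merge m u v) = u"
  by (induction m u v rule: merge.induct) auto
lemma filter_merge2: "wfm m u v \<Longrightarrow> \<forall>x\<in>set u. \<not> P x \<Longrightarrow> \<forall>y\<in>set v. P y \<Longrightarrow> filter P (merge m u v) = v"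
  by (induction m u v rule: merge.induct) auto
lemma map_P_merge: "wfm m u v \<Longrightarrow> \<forall>x\<in>set u. P x \<Longrightarrow> \<forall>y\<in>set v. \<not> P y \<Longrightarrow> map P (merge m u v) = m"
  by (induction m u v rule: merge.induct) auto
lemma merge_filter: "merge (map P w) (filter P w) (filter (\<lambda>x. \<not> P x) w) = w"
  by (induction w) auto
lemma wfm_filter: "wfm (map P w) (filter P w) (filter (\<lambda>x. \<not> P x) w)"
proof (induction w)
  case Nil then show ?case by simp
next
  case (Cons a w) then show ?case by (cases "P a") auto
qed

lemma length_filter_mset: "length (filter P xs) = size (filter_mset P (mset xs))"
  by (metis mset_filter size_mset)

lemma merge_parity:
  "wfm m u v \<Longrightarrow> set u \<inter> set v = {} \<Longrightarrow> even (ninv (merge m u v) + cnt m + ninv u + ninv v + E u v)"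
proof (induction m u v rule: merge.induct)
  case (2 m x xs ys)
  have "length (filter (\<lambda>y. y < x) (merge m xs ys)) = length (filter (\<lambda>y. y < x) xs) + length (filter (\<lambda>y. y < x) ys)"
    using mset_merge[OF 2(2)[simplified]] by (simp add: length_filter_mset)
  then show ?case using 2 by auto
next
  case (4 m xs y ys)
  have w: "wfm m xs ys" using 4(2) by simp
  have "length (filter (\<lambda>z. z < y) (merge m xs ys)) = length (filter (\<lambda>z. z < y) xs) + length (filter (\<lambda>z. z < y) ys)"
    using mset_merge[OF w] by (simp add: length_filter_mset)
  moreover have "length (filter (\<lambda>z. z < y) xs) + length (filter (\<lambda>a. y < a) xs) = length xs"
    using 4(3) by (intro length_filter_compl2) auto
  moreover have "length (filter id m) = length xs" using w by (simp add: wfm_def masks_def)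
  moreover have ev: "even (ninv (merge m xs ys) + cnt m + ninv xs + ninv ys + E xs ys)"
    using 4 by auto
  ultimately have h: "ninv (merge (False # m) xs (y # ys)) + cnt (False # m) + ninv xs + ninv (y # ys) + E xs (y # ys)
     = (ninv (merge m xs ys) + cnt m + ninv xs + ninv ys + E xs ys) + 2 * (length (filter (\<lambda>z. z < y) ys) + length xs)"
    by (simp add: E_Cons2)
  show ?case unfolding h by (rule dvd_add[OF ev]) simp
qed (simp_all)


lemma prepend_sum: "prepend x (\<Sum>m\<in>M. Poly_Mapping.single (f m) (c m)) = (\<Sum>m\<in>M. Poly_Mapping.single (x # f m) (c m))"
  by (simp add: prepend_def lin_sum)

lemma sdeg_single[simp]: "sdeg d {#i#} = d i - 1" by (simp add: sdeg_def mdeg_def)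

lemma L_simps[simp]: "L [] = []" "L (a # x) = {#a#} # L x" "L (x @ y) = L x @ L y"
  by (auto simp: L_def)

lemma wdeg_L: "wdeg d (L x) = sum_list (map (\<lambda>i. d i - 1) x)"
  by (induction x) (auto simp: wdeg_def)

definition good :: "(nat \<Rightarrow> nat) \<Rightarrow> nat set \<Rightarrow> bool" where
  "good d S \<longleftrightarrow> (\<forall>i\<in>S. even (d i) \<and> 0 < d i)"

lemma wdeg_L_parity: "good d (set x) \<Longrightarrow> even (wdeg d (L x)) \<longleftrightarrow> even (length x)"
proof (induction x)
  case (Cons a x)
  then have o: "odd (d a - 1)" by (auto simp: good_def)
  have w: "wdeg d (L (a # x)) = (d a - 1) + wdeg d (L x)" by (simp add: wdeg_def)
  have "even (wdeg d (L x)) \<longleftrightarrow> even (length x)" using Cons by (auto simp: good_def)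
  then show ?case unfolding w using o by simp
qed (simp add: wdeg_def)

lemma ks_odd: "odd a \<Longrightarrow> ks a b = sg b" by (simp add: ks_def sg_def)

lemma sum_masks_Suc_Suc:
  "(\<Sum>m\<in>masks (Suc a) (Suc b). f m) = (\<Sum>m\<in>masks a (Suc b). f (True # m)) + (\<Sum>m\<in>masks (Suc a) b. f (False # m))"
proof -
  have "(\<Sum>m\<in>masks (Suc a) (Suc b). f m) = (\<Sum>m\<in>Cons True ` masks a (Suc b). f m) + (\<Sum>m\<in>Cons False ` masks (Suc a) b. f m)"
    unfolding masks_Suc_Suc by (rule sum.union_disjoint) auto
  also have "\<dots> = (\<Sum>m\<in>masks a (Suc b). f (True # m)) + (\<Sum>m\<in>masks (Suc a) b. f (False # m))"
    by (subst (1 2) sum.reindex) auto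
  finally show ?thesis .
qed

lemma shw_formula:
  "good d (set x \<union> set y) \<Longrightarrow>
   shw d (L x) (L y) = (\<Sum>m\<in>masks (length x) (length y). Poly_Mapping.single (L (merge m x y)) (sg (cnt m)))"
proof (induction x arbitrary: y)
  case Nil
  then show ?case by (simp add: masks_0)
next
  case (Cons a x)
  note IH = Cons.IH
  from Cons.prems show ?case
  proof (induction y)
    case Nil
    then show ?case using merge_replT[of "a # x"] by (simp add: masks_0')
  next
    case (Cons b y)
    have g1: "good d (set x \<union> set (b # y))" and g2: "good d (set (a # x) \<union> set y)"
      using Cons.prems by (auto simp: good_def)
    have s1: "shw d (L x) (L (b # y)) = (\<Sum>m\<in>masks (length x) (Suc (length y)). Poly_Mapping.single (L (merge m x (b # y))) (sg (cnt m)))"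
      using IH[OF g1] by simp
    have s2: "shw d (L (a # x)) (L y) = (\<Sum>m\<in>masks (Suc (length x)) (length y). Poly_Mapping.single (L (merge m (a # x) y)) (sg (cnt m)))"
      using Cons.IH[OF g2] by simp
    have ob: "odd (d b - 1)" and gx: "good d (set x)" and oa: "odd (d a - 1)"
      using Cons.prems by (auto simp: good_def)
    have k: "ks (sdeg d {#b#}) (sdeg d {#a#} + wdeg d (L x)) = sg (Suc (length x))"
      using ob oa wdeg_L_parity[OF gx] by (simp add: ks_odd sg_def)
    have s3: "(\<Sum>m\<in>masks (Suc (length x)) (length y). Poly_Mapping.single (L (merge (False # m) (a # x) (b # y))) (sg (cnt (False # m))))
       = cmul (sg (Suc (length x))) (prepend {#b#} (\<Sum>m\<in>masks (Suc (length x)) (length y). Poly_Mapping.single (L (merge m (a # x) y)) (sg (cnt m))))"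
      unfolding prepend_sum cmul_sum
      by (rule sum.cong) (auto simp: masks_def sg_add sg_Suc)
    define f where "f m = Poly_Mapping.single (L (merge m (a # x) (b # y))) (sg (cnt m))" for m
    have e: "shw d (L (a # x)) (L (b # y)) = prepend {#a#} (shw d (L x) (L (b # y)))
       + cmul (ks (sdeg d {#b#}) (sdeg d {#a#} + wdeg d (L x))) (prepend {#b#} (shw d (L (a # x)) (L y)))"
      by simp
    have r: "(\<Sum>m\<in>masks (length (a # x)) (length (b # y)). f m) =
       (\<Sum>m\<in>masks (length x) (Suc (length y)). f (True # m)) + (\<Sum>m\<in>masks (Suc (length x)) (length y). f (False # m))"
      using sum_masks_Suc_Suc by simp
    have t: "(\<Sum>m\<in>masks (length x) (Suc (length y)). f (True # m)) = prepend {#a#} (\<Sum>m\<in>masks (length x) (Suc (length y)). Poly_Mapping.single (L (merge m x (b # y))) (sg (cnt m)))"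
      by (simp add: prepend_sum f_def)
    have t2: "(\<Sum>m\<in>masks (Suc (length x)) (length y). f (False # m)) = (\<Sum>m\<in>masks (Suc (length x)) (length y). Poly_Mapping.single (L (merge (False # m) (a # x) (b # y))) (sg (cnt (False # m))))"
      by (simp only: f_def)
    have "shw d (L (a # x)) (L (b # y)) = prepend {#a#} (\<Sum>m\<in>masks (length x) (Suc (length y)). Poly_Mapping.single (L (merge m x (b # y))) (sg (cnt m)))
       + cmul (sg (Suc (length x))) (prepend {#b#} (\<Sum>m\<in>masks (Suc (length x)) (length y). Poly_Mapping.single (L (merge m (a # x) y)) (sg (cnt m))))"
      by (simp only: e s1 s2 k)
    also have "\<dots> = (\<Sum>m\<in>masks (length (a # x)) (length (b # y)). f m)"
      by (simp only: r t t2 s3)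
    finally show ?case by (simp only: f_def)
  qed
qed


definition Phi :: "(nat \<Rightarrow> nat) \<Rightarrow> nat set \<Rightarrow> (word \<Rightarrow>\<^sub>0 rat)" where
  "Phi \<pi> A = (\<Sum>w\<in>perms A. Poly_Mapping.single (L (map \<pi> w)) (sg (ninv w)))"

definition ec :: "nat set \<Rightarrow> nat set \<Rightarrow> nat" where
  "ec A B = card {(a, b). a \<in> A \<and> b \<in> B \<and> b < a}"

lemma E_ec: "distinct u \<Longrightarrow> distinct v \<Longrightarrow> E u v = ec (set u) (set v)"
proof -
  assume du: "distinct u" and dv: "distinct v"
  have "E u v = (\<Sum>a\<in>set u. length (filter (\<lambda>b. b < a) v))"
    unfolding E_def using du by (rule sum_list_distinct_conv_sum_set)
  also have "\<dots> = (\<Sum>a\<in>set u. card {b\<in>set v. b < a})"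
    using dv by (intro sum.cong) (auto simp: distinct_length_filter Int_def conj_commute)
  also have "\<dots> = card (SIGMA a:set u. {b\<in>set v. b < a})" by simp
  also have "(SIGMA a:set u. {b\<in>set v. b < a}) = {(a, b). a \<in> set u \<and> b \<in> set v \<and> b < a}" by auto
  finally show ?thesis by (simp add: ec_def)
qed

lemma wfm_masks: "wfm m u v \<longleftrightarrow> m \<in> masks (length u) (length v)" by (simp add: wfm_def)

lemma key_disj:
  assumes fA: "finite A" and fB: "finite B" and dj: "A \<inter> B = {}" and g: "good d (\<pi> ` (A \<union> B))"
  shows "lin2 (shw d) (Phi \<pi> A) (Phi \<pi> B) = cmul (sg (ec A B)) (Phi \<pi> (A \<union> B))"
proof -
  let ?M = "masks (card A) (card B)"
  define G where "G x = Poly_Mapping.single (L (map \<pi> (merge (snd (snd x)) (fst x) (fst (snd x)))))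
      (sg (ninv (fst x)) * sg (ninv (fst (snd x))) * sg (cnt (snd (snd x))))" for x :: "nat list \<times> nat list \<times> bool list"
  have "lin2 (shw d) (Phi \<pi> A) (Phi \<pi> B) = (\<Sum>u\<in>perms A. cmul (sg (ninv u)) (\<Sum>v\<in>perms B. cmul (sg (ninv v)) (shw d (L (map \<pi> u)) (L (map \<pi> v)))))"
    unfolding lin2_lin Phi_def lin_sum_single ..
  also have "\<dots> = (\<Sum>u\<in>perms A. \<Sum>v\<in>perms B. \<Sum>m\<in>?M. G (u, v, m))"
  proof (intro sum.cong refl)
    fix u assume u: "u \<in> perms A"
    have lu: "length u = card A" using u by (auto simp: perms_length)
    show "cmul (sg (ninv u)) (\<Sum>v\<in>perms B. cmul (sg (ninv v)) (shw d (L (map \<pi> u)) (L (map \<pi> v)))) = (\<Sum>v\<in>perms B. \<Sum>m\<in>?M. G (u, v, m))"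
      unfolding cmul_sum
    proof (intro sum.cong refl)
      fix v assume v: "v \<in> perms B"
      have gg: "good d (set (map \<pi> u) \<union> set (map \<pi> v))" using g u v by (auto simp: perms_def good_def)
      have lv: "length v = card B" using v by (auto simp: perms_length)
      show "cmul (sg (ninv u)) (cmul (sg (ninv v)) (shw d (L (map \<pi> u)) (L (map \<pi> v)))) = (\<Sum>m\<in>?M. G (u, v, m))"
        unfolding shw_formula[OF gg] cmul_cmul cmul_sum cmul_single
        using lu lv by (intro sum.cong) (auto simp: G_def map_merge mult.assoc)
    qed
  qed
  also have "\<dots> = (\<Sum>x\<in>perms A \<times> (perms B \<times> ?M). G x)"
    by (simp add: sum.cartesian_product)
  also have "\<dots> = (\<Sum>w\<in>perms (A \<union> B). Poly_Mapping.single (L (map \<pi> w)) (sg (ec A B) * sg (ninv w)))"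
  proof (rule sum.reindex_bij_witness[where j = "\<lambda>x. merge (snd (snd x)) (fst x) (fst (snd x))"
          and i = "\<lambda>w. (filter (\<lambda>x. x \<in> A) w, filter (\<lambda>x. x \<notin> A) w, map (\<lambda>x. x \<in> A) w)"])
    fix x assume x: "x \<in> perms A \<times> (perms B \<times> ?M)"
    obtain u v m where xe: "x = (u, v, m)" by (cases x) auto
    have u: "distinct u" "set u = A" and v: "distinct v" "set v = B" and m: "m \<in> ?M"
      using x xe by (auto simp: perms_def)
    have luv: "length u = card A" "length v = card B" using u v by (metis distinct_card)+
    then have w: "wfm m u v" using m by (simp add: wfm_def)
    have uA: "\<forall>x\<in>set u. x \<in> A" and vA: "\<forall>y\<in>set v. y \<notin> A" using u v dj by auto
    show "(filter (\<lambda>x. x \<in> A) (merge (snd (snd x)) (fst x) (fst (snd x))),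
           filter (\<lambda>x. x \<notin> A) (merge (snd (snd x)) (fst x) (fst (snd x))),
           map (\<lambda>x. x \<in> A) (merge (snd (snd x)) (fst x) (fst (snd x)))) = x"
      unfolding xe using filter_merge[OF w uA vA] filter_merge2[of m u v "\<lambda>x. x \<notin> A", OF w] map_P_merge[OF w uA vA] uA vA
      by auto
    have ms: "mset (merge m u v) = mset u + mset v" using mset_merge[OF w] .
    then have sw: "set (merge m u v) = A \<union> B" using u v by (metis set_mset_mset set_mset_union)
    have "length (merge m u v) = length u + length v" using ms by (metis size_mset size_union)
    also have "\<dots> = card A + card B" using luv by simp
    also have "\<dots> = card (A \<union> B)" using fA fB dj by (simp add: card_Un_disjoint)
    finally have "distinct (merge m u v)" using sw by (simp add: card_distinct)
    then show "merge (snd (snd x)) (fst x) (fst (snd x)) \<in> perms (A \<union> B)"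
      using sw xe by (simp add: perms_def)
    have par: "even (ninv (merge m u v) + cnt m + ninv u + ninv v + E u v)"
      using merge_parity[OF w] u v dj by auto
    have "E u v = ec A B" using E_ec[of u v] u v by simp
    then have "sg (ninv u) * sg (ninv v) * sg (cnt m) = sg (ec A B) * sg (ninv (merge m u v))"
      using par unfolding sg_add[symmetric] by (intro sg_even_eq) (simp add: algebra_simps)
    then show "Poly_Mapping.single (L (map \<pi> (merge (snd (snd x)) (fst x) (fst (snd x))))) (sg (ec A B) * sg (ninv (merge (snd (snd x)) (fst x) (fst (snd x))))) = G x"
      unfolding G_def xe by simp
  next
    fix w assume w: "w \<in> perms (A \<union> B)"
    show "merge (snd (snd (filter (\<lambda>x. x \<in> A) w, filter (\<lambda>x. x \<notin> A) w, map (\<lambda>x. x \<in> A) w)))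
           (fst (filter (\<lambda>x. x \<in> A) w, filter (\<lambda>x. x \<notin> A) w, map (\<lambda>x. x \<in> A) w))
           (fst (snd (filter (\<lambda>x. x \<in> A) w, filter (\<lambda>x. x \<notin> A) w, map (\<lambda>x. x \<in> A) w))) = w"
      using merge_filter[of "\<lambda>x. x \<in> A" w] by simp
    have dw: "distinct w" and sw: "set w = A \<union> B" using w by (auto simp: perms_def)
    have s1: "set (filter (\<lambda>x. x \<in> A) w) = A" and s2: "set (filter (\<lambda>x. x \<notin> A) w) = B"
      using sw dj by auto
    have "wfm (map (\<lambda>x. x \<in> A) w) (filter (\<lambda>x. x \<in> A) w) (filter (\<lambda>x. x \<notin> A) w)"
      using wfm_filter[of "\<lambda>x. x \<in> A" w] by simp
    moreover have "length (filter (\<lambda>x. x \<in> A) w) = card A" "length (filter (\<lambda>x. x \<notin> A) w) = card B"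
      using s1 s2 dw by (metis distinct_card distinct_filter)+
    ultimately have "map (\<lambda>x. x \<in> A) w \<in> ?M" by (simp add: wfm_def)
    then show "(filter (\<lambda>x. x \<in> A) w, filter (\<lambda>x. x \<notin> A) w, map (\<lambda>x. x \<in> A) w) \<in> perms A \<times> (perms B \<times> ?M)"
      using s1 s2 dw by (simp add: perms_def)
  qed
  also have "\<dots> = cmul (sg (ec A B)) (Phi \<pi> (A \<union> B))"
    by (simp add: Phi_def cmul_sum)
  finally show ?thesis .
qed


lemma inv_map_mono: "(\<forall>a\<in>set u. \<forall>b\<in>set u. f a < f b \<longleftrightarrow> a < b) \<Longrightarrow> ninv (map f u) = ninv u"
proof (induction u)
  case (Cons x u)
  have "length (filter (\<lambda>y. y < f x) (map f u)) = length (filter (\<lambda>y. f y < f x) u)"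
    by (simp add: filter_map comp_def)
  also have "\<dots> = length (filter (\<lambda>y. y < x) u)"
    using Cons.prems by (intro arg_cong[where f=length] filter_cong) auto
  finally show ?case using Cons by simp
qed simp

lemma Phi_reindex:
  assumes "\<forall>a\<in>A. g (f a) = a" "\<forall>a\<in>A. \<forall>b\<in>A. f a < f b \<longleftrightarrow> a < b" "\<forall>a\<in>A. \<pi> (f a) = \<rho> a"
  shows "Phi \<rho> A = Phi \<pi> (f ` A)"
  unfolding Phi_def
proof (rule sum.reindex_bij_witness[where j = "map f" and i = "map g"])
  fix w assume w: "w \<in> perms A"
  then have sw: "set w = A" and dw: "distinct w" by (auto simp: perms_def)
  have "\<forall>a\<in>set w. g (f a) = a" using assms(1) sw by simp
  then show "map g (map f w) = w" by (induction w) auto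
  have "inj_on f A" using assms(1) by (metis inj_on_inverseI)
  then show "map f w \<in> perms (f ` A)" using sw dw by (auto simp: perms_def distinct_map)
  have "ninv (map f w) = ninv w" using assms(2) sw by (intro inv_map_mono) auto
  moreover have "map \<pi> (map f w) = map \<rho> w" using assms(3) sw by auto
  ultimately show "Poly_Mapping.single (L (map \<pi> (map f w))) (sg (ninv (map f w))) = Poly_Mapping.single (L (map \<rho> w)) (sg (ninv w))"
    by (simp only:)
next
  fix w assume w: "w \<in> perms (f ` A)"
  then have sw: "set w = f ` A" and dw: "distinct w" by (auto simp: perms_def)
  have "\<forall>a\<in>set w. f (g a) = a" using assms(1) sw by auto
  then show "map f (map g w) = w" by (induction w) auto
  have "inj_on g (f ` A)" using assms(1) by (auto simp: inj_on_def)
  then show "map g w \<in> perms A" using sw dw assms(1) by (auto simp: perms_def distinct_map image_image)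
qed

definition tau :: "nat \<Rightarrow> nat \<Rightarrow> nat" where
  "tau x z = (if z = x then Suc x else if z = Suc x then x else z)"

lemma tau_tau[simp]: "tau x (tau x z) = z" by (simp add: tau_def)
lemma tau_x: "tau x x = Suc x" and tau_Sx: "tau x (Suc x) = x" by (simp_all add: tau_def)

lemma count_tau1: "Suc x \<in> set w \<Longrightarrow> x \<notin> set w \<Longrightarrow> distinct w \<Longrightarrow>
   length (filter (\<lambda>z. tau x z < Suc x) w) = Suc (length (filter (\<lambda>z. z < x) w))"
proof (induction w)
  case (Cons c w)
  show ?case
  proof (cases "c = Suc x")
    case True
    then have "Suc x \<notin> set w" using Cons.prems by auto
    then have "filter (\<lambda>z. tau x z < Suc x) w = filter (\<lambda>z. z < x) w"
      using Cons.prems by (intro filter_cong) (auto simp: tau_def)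
    then show ?thesis using True by (simp add: tau_def)
  next
    case False
    then show ?thesis using Cons by (auto simp: tau_def)
  qed
qed simp

lemma count_tau2: "x \<in> set w \<Longrightarrow> Suc x \<notin> set w \<Longrightarrow> distinct w \<Longrightarrow>
   length (filter (\<lambda>z. z < Suc x) w) = Suc (length (filter (\<lambda>z. tau x z < x) w))"
proof (induction w)
  case (Cons c w)
  show ?case
  proof (cases "c = x")
    case True
    then have "x \<notin> set w" using Cons.prems by auto
    then have "filter (\<lambda>z. tau x z < x) w = filter (\<lambda>z. z < Suc x) w"
      using Cons.prems by (intro filter_cong) (auto simp: tau_def)
    then show ?thesis using True by (simp add: tau_def)
  next
    case False
    then show ?thesis using Cons by (auto simp: tau_def)
  qed
qed simp

lemma inv_tau_notin: "x \<notin> set w \<or> Suc x \<notin> set w \<Longrightarrow> ninv (map (tau x) w) = ninv w"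
  by (rule inv_map_mono) (auto simp: tau_def)

lemma inv_tau: "distinct w \<Longrightarrow> x \<in> set w \<Longrightarrow> Suc x \<in> set w \<Longrightarrow> odd (ninv (map (tau x) w) + ninv w)"
proof (induction w)
  case (Cons a w)
  show ?case
  proof (cases "a = x")
    case True
    then have "x \<notin> set w" "Suc x \<in> set w" "distinct w" using Cons.prems by auto
    then show ?thesis using True count_tau1[of x w] inv_tau_notin[of x w]
      by (simp add: tau_x filter_map comp_def)
  next
    case False
    show ?thesis
    proof (cases "a = Suc x")
      case True
      then have "x \<in> set w" "Suc x \<notin> set w" "distinct w" using Cons.prems by auto
      then show ?thesis using True count_tau2[of x w] inv_tau_notin[of x w]
        by (simp add: tau_Sx filter_map comp_def)
    next
      case F2: False
      then have "filter (\<lambda>z. tau x z < a) w = filter (\<lambda>z. z < a) w"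
        using False by (intro filter_cong) (auto simp: tau_def)
      moreover have "tau x a = a" using False F2 by (simp add: tau_def)
      ultimately show ?thesis using Cons False F2 by (simp add: filter_map comp_def)
    qed
  qed
qed simp

lemma poly_neg_self: "(p :: 'a \<Rightarrow>\<^sub>0 rat) = - p \<Longrightarrow> p = 0"
proof (rule poly_mapping_eqI)
  fix k assume "p = - p"
  then have "Poly_Mapping.lookup p k = Poly_Mapping.lookup (- p) k" by simp
  then show "Poly_Mapping.lookup p k = Poly_Mapping.lookup 0 k" by simp
qed

lemma Phi_zero:
  assumes "x \<in> C" "Suc x \<in> C" "\<pi> x = \<pi> (Suc x)"
  shows "Phi \<pi> C = 0"
proof -
  have pt: "map \<pi> (map (tau x) w) = map \<pi> w" for w
    using assms(3) by (induction w) (auto simp: tau_def)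
  have tt: "map (tau x) (map (tau x) w) = w" for w by (simp add: comp_def)
  have mem: "map (tau x) w \<in> perms C" if "w \<in> perms C" for w
  proof -
    have sw: "set w = C" and dw: "distinct w" using that by (auto simp: perms_def)
    have "inj (tau x)" by (metis injI tau_tau)
    moreover have "tau x ` C = C"
      using assms by (auto simp: tau_def image_iff)
    ultimately show "map (tau x) w \<in> perms C" using sw dw by (auto simp: perms_def distinct_map inj_on_def)
  qed
  have "Phi \<pi> C = (\<Sum>w\<in>perms C. - Poly_Mapping.single (L (map \<pi> w)) (sg (ninv w)))"
    unfolding Phi_def
  proof (rule sum.reindex_bij_witness[where j = "map (tau x)" and i = "map (tau x)"])
    fix w assume w: "w \<in> perms C"
    then have sw: "set w = C" and dw: "distinct w" by (auto simp: perms_def)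
    show "map (tau x) (map (tau x) w) = w" by (rule tt)
    show "map (tau x) w \<in> perms C" using w by (rule mem)
    have "odd (ninv (map (tau x) w) + ninv w)" using inv_tau[OF dw] sw assms by auto
    then have "sg (ninv (map (tau x) w)) = - sg (ninv w)" by (auto simp: sg_def)
    then show "- Poly_Mapping.single (L (map \<pi> (map (tau x) w))) (sg (ninv (map (tau x) w))) = Poly_Mapping.single (L (map \<pi> w)) (sg (ninv w))"
      by (simp only: pt single_uminus minus_minus)
  next
    fix w assume "w \<in> perms C"
    show "map (tau x) (map (tau x) w) = w" by (rule tt)
    show "map (tau x) w \<in> perms C" using \<open>w \<in> perms C\<close> by (rule mem)
  qed
  also have "\<dots> = - Phi \<pi> C" by (simp add: Phi_def sum_negf)
  finally show ?thesis by (rule poly_neg_self)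
qed

lemma key_ovl:
  assumes fA: "finite A" and fB: "finite B" and ov: "A \<inter> B \<noteq> {}" and g: "good d (A \<union> B)"
  shows "lin2 (shw d) (Phi id A) (Phi id B) = 0"
proof -
  let ?h = "\<lambda>x::nat. x div 2"
  have pA: "Phi id A = Phi ?h ((\<lambda>a. 2 * a) ` A)"
    by (rule Phi_reindex[where g = "\<lambda>x. x div 2"]) simp_all
  have pB: "Phi id B = Phi ?h ((\<lambda>a. 2 * a + 1) ` B)"
    by (rule Phi_reindex[where g = "\<lambda>x. x div 2"]) simp_all
  have ne: "2 * a \<noteq> 2 * b + 1" for a b :: nat by presburger
  have dj: "(\<lambda>a. 2 * a) ` A \<inter> (\<lambda>a. 2 * a + 1) ` B = {}" using ne by blast
  have im: "?h ` ((\<lambda>a. 2 * a) ` A \<union> (\<lambda>a. 2 * a + 1) ` B) = A \<union> B"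
  proof -
    have e1: "(\<lambda>a::nat. (2 * a) div 2) = (\<lambda>a. a)" by auto
    have e2: "(\<lambda>a::nat. (2 * a + 1) div 2) = (\<lambda>a. a)" by auto
    show ?thesis unfolding image_Un image_image e1 e2 image_ident ..
  qed
  define A' where "A' = (\<lambda>a. 2 * a) ` A"
  define B' where "B' = (\<lambda>a. 2 * a + 1) ` B"
  have "lin2 (shw d) (Phi ?h A') (Phi ?h B') = cmul (sg (ec A' B')) (Phi ?h (A' \<union> B'))"
  proof (rule key_disj)
    show "finite A'" "finite B'" using fA fB by (simp_all add: A'_def B'_def)
    show "A' \<inter> B' = {}" using dj by (simp add: A'_def B'_def)
    show "good d (?h ` (A' \<union> B'))" using g im by (simp add: A'_def B'_def)
  qed
  then have "lin2 (shw d) (Phi id A) (Phi id B) = cmul (sg (ec A' B')) (Phi ?h (A' \<union> B'))"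
    unfolding pA pB A'_def B'_def .
  moreover obtain c where c: "c \<in> A" "c \<in> B" using ov by auto
  have m1: "2 * c \<in> A' \<union> B'" using c unfolding A'_def by blast
  have m2: "Suc (2 * c) \<in> A' \<union> B'" using c unfolding B'_def by (metis Suc_eq_plus1 UnI2 rev_image_eqI)
  have "Phi ?h (A' \<union> B') = 0"
    by (rule Phi_zero[OF m1 m2]) simp
  ultimately show ?thesis by simp
qed

lemma Phi_single: "Phi id {i} = Poly_Mapping.single [{#i#}] 1"
  by (simp add: Phi_def)

lemma Phi_empty: "Phi \<pi> {} = Poly_Mapping.single [] 1"
  by (simp add: Phi_def)

lemma fold_Phi:
  "sorted_wrt (<) l \<Longrightarrow> good d (set l) \<Longrightarrow>
   foldr (\<lambda>i acc. shuffle d (Poly_Mapping.single [{#i#}] 1) acc) l (Poly_Mapping.single [] 1) = Phi id (set l)"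
proof (induction l)
  case Nil
  then show ?case by (simp add: Phi_empty)
next
  case (Cons i l)
  have "{(a, b). a \<in> {i} \<and> b \<in> set l \<and> b < a} = {}" using Cons.prems by auto
  then have "ec {i} (set l) = card ({} :: (nat \<times> nat) set)" unfolding ec_def by (simp only:)
  then have e: "ec {i} (set l) = 0" by simp
  have "lin2 (shw d) (Phi id {i}) (Phi id (set l)) = cmul (sg (ec {i} (set l))) (Phi id ({i} \<union> set l))"
    by (rule key_disj) (use Cons.prems in \<open>auto simp: good_def\<close>)
  then have kd: "lin2 (shw d) (Phi id {i}) (Phi id (set l)) = Phi id (set (i # l))"
    using e by simp
  have IH: "foldr (\<lambda>i acc. shuffle d (Poly_Mapping.single [{#i#}] 1) acc) l (Poly_Mapping.single [] 1) = Phi id (set l)"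
    by (rule Cons.IH) (use Cons.prems in \<open>auto simp: good_def\<close>)
  show ?case
    unfolding foldr_Cons o_apply IH by (simp only: shuffle_def Phi_single[symmetric] kd)
qed

lemma fb_Phi: "finite S \<Longrightarrow> good d S \<Longrightarrow> fb d S = Phi id S"
proof -
  assume "finite S" "good d S"
  then show ?thesis unfolding fb_def
    by (subst fold_Phi) simp_all
qed


lemma lin2_add_left: "lin2 g (p1 + p2) q = lin2 g p1 q + lin2 g p2 q"
  by (simp add: lin2_lin lin_add)

lemma lin2_single_left: "lin2 g (Poly_Mapping.single k 1) q = lin (g k) q"
  by (simp add: lin2_lin)

lemma tens_single: "tens (Poly_Mapping.single a 1) (Poly_Mapping.single b 1) = Poly_Mapping.single (a, b) 1"
  by (simp add: tens_def lin2_lin)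

lemma wedgeb_empty_left: "wedgeb {} X = Poly_Mapping.single X 1"
  by (simp add: wedgeb_def)

lemma wedgeb_min: "i \<notin> A \<Longrightarrow> \<forall>b\<in>A. i < b \<Longrightarrow> wedgeb {i} A = Poly_Mapping.single (insert i A) 1"
proof -
  assume "i \<notin> A" "\<forall>b\<in>A. i < b"
  then have "{(a, b). a = i \<and> b \<in> A \<and> b < a} = {}" by auto
  then have c: "card {(a, b). a = i \<and> b \<in> A \<and> b < a} = 0" by (simp only: card.empty)
  show ?thesis using \<open>i \<notin> A\<close> c unfolding wedgeb_def by simp
qed

lemma edeg_parity: "finite A \<Longrightarrow> good d A \<Longrightarrow> even (edeg d A) \<longleftrightarrow> even (card A)"
proof (induction A rule: finite_induct)
  case empty then show ?case by (simp add: edeg_def)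
next
  case (insert a A)
  then have o: "odd (d a - 1)" and g: "good d A" by (auto simp: good_def)
  have "edeg d (insert a A) = (d a - 1) + edeg d A" using insert by (simp add: edeg_def)
  then show ?case using insert o g by simp
qed

lemma ec_insert_left: "\<forall>b\<in>X. i < b \<Longrightarrow> ec (insert i A) X = ec A X"
proof -
  assume "\<forall>b\<in>X. i < b"
  then have "{(a, b). a \<in> insert i A \<and> b \<in> X \<and> b < a} = {(a, b). a \<in> A \<and> b \<in> X \<and> b < a}" by auto
  then show ?thesis by (simp add: ec_def)
qed

lemma ec_insert_right: "finite A \<Longrightarrow> finite X \<Longrightarrow> i \<notin> X \<Longrightarrow> \<forall>a\<in>A. i < a \<Longrightarrow> ec A (insert i X) = ec A X + card A"
proof -
  assume fA: "finite A" and fX: "finite X" and iX: "i \<notin> X" and lt: "\<forall>a\<in>A. i < a"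
  have eq: "{(a, b). a \<in> A \<and> b \<in> insert i X \<and> b < a} = {(a, b). a \<in> A \<and> b \<in> X \<and> b < a} \<union> A \<times> {i}"
    using lt by auto
  have fin: "finite {(a, b). a \<in> A \<and> b \<in> X \<and> b < a}"
    by (rule finite_subset[of _ "A \<times> X"]) (use fA fX in auto)
  have "card ({(a, b). a \<in> A \<and> b \<in> X \<and> b < a} \<union> A \<times> {i}) = card {(a, b). a \<in> A \<and> b \<in> X \<and> b < a} + card (A \<times> {i})"
    by (rule card_Un_disjoint) (use fin fA iX in auto)
  then show ?thesis unfolding ec_def eq by (simp add: card_cartesian_product)
qed

definition coS :: "nat set \<Rightarrow> ((nat set \<times> nat set) \<Rightarrow>\<^sub>0 rat)" where
  "coS S = (\<Sum>A\<in>Pow S. Poly_Mapping.single (A, S - A) (sg (ec A (S - A))))"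

lemma coH_fold:
  "sorted_wrt (<) l \<Longrightarrow> good d (set l) \<Longrightarrow>
   foldr (\<lambda>i acc. tmul d (Poly_Mapping.single ({i}, {}) 1 + Poly_Mapping.single ({}, {i}) 1) acc) l
     (Poly_Mapping.single ({}, {}) 1) = coS (set l)"
proof (induction l)
  case Nil
  then show ?case by (simp add: coS_def ec_def)
next
  case (Cons i l)
  define S where "S = set l"
  have lt: "\<forall>b\<in>S. i < b" and iS: "i \<notin> S" and fS: "finite S" using Cons.prems by (auto simp: S_def)
  have oi: "odd (edeg d {i})" using Cons.prems by (auto simp: good_def edeg_def)
  have gS: "good d S" using Cons.prems by (auto simp: good_def S_def)
  have IH: "foldr (\<lambda>i acc. tmul d (Poly_Mapping.single ({i}, {}) 1 + Poly_Mapping.single ({}, {i}) 1) acc) l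
     (Poly_Mapping.single ({}, {}) 1) = coS S"
    unfolding S_def by (rule Cons.IH) (use Cons.prems in \<open>auto simp: good_def\<close>)
  let ?G = "\<lambda>(A, B) (C, E). cmul (ks (edeg d B) (edeg d C)) (tens (wedgeb A C) (wedgeb B E))"
  have p1: "lin (?G ({i}, {})) (coS S) = (\<Sum>A\<in>Pow S. Poly_Mapping.single (insert i A, S - A) (sg (ec A (S - A))))"
    unfolding coS_def lin_sum_single
  proof (intro sum.cong refl)
    fix A assume A: "A \<in> Pow S"
    have "wedgeb {i} A = Poly_Mapping.single (insert i A) 1" using A lt iS by (intro wedgeb_min) auto
    then show "cmul (sg (ec A (S - A))) (?G ({i}, {}) (A, S - A)) = Poly_Mapping.single (insert i A, S - A) (sg (ec A (S - A)))"
      by (simp add: wedgeb_empty_left tens_single ks_def edeg_def)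
  qed
  have p2: "lin (?G ({}, {i})) (coS S) = (\<Sum>A\<in>Pow S. Poly_Mapping.single (A, insert i (S - A)) (sg (ec A (S - A) + card A)))"
    unfolding coS_def lin_sum_single
  proof (intro sum.cong refl)
    fix A assume A: "A \<in> Pow S"
    have fA: "finite A" using A fS finite_subset by auto
    have "wedgeb {i} (S - A) = Poly_Mapping.single (insert i (S - A)) 1" using A lt iS by (intro wedgeb_min) auto
    moreover have "ks (edeg d {i}) (edeg d A) = sg (card A)"
      using oi edeg_parity[OF fA] gS A by (auto simp: ks_odd sg_def good_def)
    ultimately show "cmul (sg (ec A (S - A))) (?G ({}, {i}) (A, S - A)) = Poly_Mapping.single (A, insert i (S - A)) (sg (ec A (S - A) + card A))"
      by (simp add: wedgeb_empty_left tens_single sg_add mult.commute)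
  qed
  have r: "coS (insert i S) = (\<Sum>A\<in>Pow S. Poly_Mapping.single (insert i A, S - A) (sg (ec A (S - A))))
      + (\<Sum>A\<in>Pow S. Poly_Mapping.single (A, insert i (S - A)) (sg (ec A (S - A) + card A)))"
  proof -
    have "coS (insert i S) = (\<Sum>A\<in>Pow S \<union> insert i ` Pow S. Poly_Mapping.single (A, insert i S - A) (sg (ec A (insert i S - A))))"
      unfolding coS_def Pow_insert ..
    also have "\<dots> = (\<Sum>A\<in>Pow S. Poly_Mapping.single (A, insert i S - A) (sg (ec A (insert i S - A))))
        + (\<Sum>A\<in>insert i ` Pow S. Poly_Mapping.single (A, insert i S - A) (sg (ec A (insert i S - A))))"
      by (rule sum.union_disjoint) (use fS iS in auto)
    also have "(\<Sum>A\<in>insert i ` Pow S. Poly_Mapping.single (A, insert i S - A) (sg (ec A (insert i S - A))))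
        = (\<Sum>A\<in>Pow S. Poly_Mapping.single (insert i A, S - A) (sg (ec A (S - A))))"
    proof -
      have inj: "inj_on (insert i) (Pow S)" using iS by (auto simp: inj_on_def)
      have "(\<Sum>A\<in>insert i ` Pow S. Poly_Mapping.single (A, insert i S - A) (sg (ec A (insert i S - A))))
         = (\<Sum>A\<in>Pow S. Poly_Mapping.single (insert i A, insert i S - insert i A) (sg (ec (insert i A) (insert i S - insert i A))))"
        by (simp only: sum.reindex[OF inj] comp_def)
      also have "(\<Sum>A\<in>Pow S. Poly_Mapping.single (insert i A, insert i S - insert i A) (sg (ec (insert i A) (insert i S - insert i A))))
          = (\<Sum>A\<in>Pow S. Poly_Mapping.single (insert i A, S - A) (sg (ec A (S - A))))"
      proof (intro sum.cong refl)
        fix A assume "A \<in> Pow S"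
        then have e: "insert i S - insert i A = S - A" using iS by auto
        show "Poly_Mapping.single (insert i A, insert i S - insert i A) (sg (ec (insert i A) (insert i S - insert i A)))
          = Poly_Mapping.single (insert i A, S - A) (sg (ec A (S - A)))"
          unfolding e using lt by (subst ec_insert_left) auto
      qed
      finally show ?thesis .
    qed
    also have "(\<Sum>A\<in>Pow S. Poly_Mapping.single (A, insert i S - A) (sg (ec A (insert i S - A))))
       = (\<Sum>A\<in>Pow S. Poly_Mapping.single (A, insert i (S - A)) (sg (ec A (S - A) + card A)))"
    proof (intro sum.cong refl)
      fix A assume A: "A \<in> Pow S"
      then have e: "insert i S - A = insert i (S - A)" using iS by auto
      have fA: "finite A" using A fS finite_subset by auto
      show "Poly_Mapping.single (A, insert i S - A) (sg (ec A (insert i S - A))) = Poly_Mapping.single (A, insert i (S - A)) (sg (ec A (S - A) + card A))"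
        unfolding e using A lt fA fS iS by (subst ec_insert_right) auto
    qed
    finally show ?thesis by (simp add: add.commute)
  qed
  show ?case
    unfolding foldr_Cons o_apply IH
    unfolding tmul_def lin2_add_left lin2_single_left p1 p2 r S_def[symmetric] list.set(2) ..
qed

lemma coHb_coS: "finite S \<Longrightarrow> good d S \<Longrightarrow> coHb d S = coS S"
proof -
  assume "finite S" "good d S"
  then show ?thesis unfolding coHb_def by (subst coH_fold) simp_all
qed


lemma length_L[simp]: "length (L w) = length w" by (simp add: L_def)
lemma take_L: "take j (L w) = L (take j w)" by (simp add: L_def take_map)
lemma drop_L: "drop j (L w) = L (drop j w)" by (simp add: L_def drop_map)
lemma nth_L: "j < length w \<Longrightarrow> L w ! j = {#w ! j#}" by (simp add: L_def)

lemma tens_Phi: "tens (Phi id A) (Phi id B) =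
   (\<Sum>u\<in>perms A. \<Sum>v\<in>perms B. Poly_Mapping.single (L u, L v) (sg (ninv u) * sg (ninv v)))"
  unfolding tens_def lin2_lin Phi_def lin_sum_single list.map_id cmul_sum
  by (intro sum.cong refl) (simp add: mult.commute)

lemma deconc_Phi:
  assumes fS: "finite S" and gS: "good d S"
  shows "deconc (Phi id S) = ftens d (coS S)"
proof -
  define H where "H x = Poly_Mapping.single (L (take (snd x) (fst x)), L (drop (snd x) (fst x))) (sg (ninv (fst x)))"
    for x :: "nat list \<times> nat"
  define G where "G y = Poly_Mapping.single (L (fst (snd y)), L (snd (snd y)))
      (sg (ec (fst y) (S - fst y)) * (sg (ninv (fst (snd y))) * sg (ninv (snd (snd y)))))"
    for y :: "nat set \<times> nat list \<times> nat list"
  have "deconc (Phi id S) = (\<Sum>w\<in>perms S. \<Sum>j\<in>{0..card S}. H (w, j))"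
    unfolding deconc_def Phi_def lin_sum_single list.map_id
  proof (intro sum.cong refl)
    fix w assume w: "w \<in> perms S"
    then have lw: "length w = card S" by (rule perms_length)
    show "cmul (sg (ninv w)) (\<Sum>j\<in>{0..length (L w)}. Poly_Mapping.single (take j (L w), drop j (L w)) 1) = (\<Sum>j\<in>{0..card S}. H (w, j))"
      unfolding cmul_sum length_L lw by (intro sum.cong refl) (simp add: H_def take_L drop_L)
  qed
  also have "\<dots> = (\<Sum>x\<in>perms S \<times> {0..card S}. H x)"
    by (simp add: sum.cartesian_product)
  also have "\<dots> = (\<Sum>y\<in>(SIGMA A:Pow S. perms A \<times> perms (S - A)). G y)"
  proof (rule sum.reindex_bij_witness[where i = "\<lambda>y. (fst (snd y) @ snd (snd y), length (fst (snd y)))"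
        and j = "\<lambda>x. (set (take (snd x) (fst x)), take (snd x) (fst x), drop (snd x) (fst x))"])
    fix x assume x: "x \<in> perms S \<times> {0..card S}"
    obtain w k where xe: "x = (w, k)" by (cases x)
    have dw: "distinct w" and sw: "set w = S" and k: "k \<le> card S" using x xe by (auto simp: perms_def)
    have lw: "length w = card S" using distinct_card[OF dw] sw by simp
    show "(fst (snd (set (take (snd x) (fst x)), take (snd x) (fst x), drop (snd x) (fst x))) @
           snd (snd (set (take (snd x) (fst x)), take (snd x) (fst x), drop (snd x) (fst x))),
          length (fst (snd (set (take (snd x) (fst x)), take (snd x) (fst x), drop (snd x) (fst x))))) = x"
      using xe k lw by simp
    have st: "set (take k w) \<subseteq> S" using sw set_take_subset[of k w] by simp
    have sd: "set (drop k w) = S - set (take k w)"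
    proof -
      have u: "set w = set (take k w) \<union> set (drop k w)" using set_append[of "take k w" "drop k w"] by simp
      have "set (take k w) \<inter> set (drop k w) = {}" using dw distinct_append[of "take k w" "drop k w"] by simp
      then show ?thesis using u sw by auto
    qed
    show "(set (take (snd x) (fst x)), take (snd x) (fst x), drop (snd x) (fst x)) \<in> (SIGMA A:Pow S. perms A \<times> perms (S - A))"
      using xe st sd dw by (auto simp: perms_def)
    have "ninv w = ninv (take k w) + ninv (drop k w) + E (take k w) (drop k w)"
      using inv_append[of "take k w" "drop k w"] by simp
    moreover have "E (take k w) (drop k w) = ec (set (take k w)) (S - set (take k w))"
      using E_ec[of "take k w" "drop k w"] dw sd by simp
    ultimately have "sg (ninv w) = sg (ec (set (take k w)) (S - set (take k w))) * (sg (ninv (take k w)) * sg (ninv (drop k w)))"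
      by (simp add: sg_add mult.commute mult.left_commute)
    then show "G (set (take (snd x) (fst x)), take (snd x) (fst x), drop (snd x) (fst x)) = H x"
      unfolding G_def H_def xe by simp
  next
    fix y assume y: "y \<in> (SIGMA A:Pow S. perms A \<times> perms (S - A))"
    obtain A u v where ye: "y = (A, u, v)" by (cases y) auto
    have AS: "A \<subseteq> S" and du: "distinct u" "set u = A" and dv: "distinct v" "set v = S - A"
      using y ye by (auto simp: perms_def)
    show "(set (take (snd (fst (snd y) @ snd (snd y), length (fst (snd y)))) (fst (fst (snd y) @ snd (snd y), length (fst (snd y))))),
           take (snd (fst (snd y) @ snd (snd y), length (fst (snd y)))) (fst (fst (snd y) @ snd (snd y), length (fst (snd y)))),
           drop (snd (fst (snd y) @ snd (snd y), length (fst (snd y)))) (fst (fst (snd y) @ snd (snd y), length (fst (snd y))))) = y"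
      using ye du by simp
    have "distinct (u @ v)" using du dv by auto
    moreover have "set (u @ v) = S" using du dv AS by auto
    moreover have "length u \<le> card S" using du AS fS by (metis card_mono distinct_card)
    ultimately show "(fst (snd y) @ snd (snd y), length (fst (snd y))) \<in> perms S \<times> {0..card S}"
      using ye by (simp add: perms_def)
  qed
  also have "\<dots> = (\<Sum>A\<in>Pow S. \<Sum>uv\<in>perms A \<times> perms (S - A). G (A, uv))"
  proof -
    have "(\<Sum>A\<in>Pow S. \<Sum>uv\<in>perms A \<times> perms (S - A). G (A, uv)) = (\<Sum>(A, uv)\<in>(SIGMA A:Pow S. perms A \<times> perms (S - A)). G (A, uv))"
      by (rule sum.Sigma) (use fS in auto)
    then show ?thesis by simp
  qed
  also have "\<dots> = ftens d (coS S)"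
    unfolding ftens_def coS_def lin_sum_single
  proof (intro sum.cong refl)
    fix A assume A: "A \<in> Pow S"
    have fA: "finite A" and fB: "finite (S - A)" using A fS finite_subset by auto
    have gA: "good d A" and gB: "good d (S - A)" using A gS by (auto simp: good_def)
    show "(\<Sum>uv\<in>perms A \<times> perms (S - A). G (A, uv)) =
      cmul (sg (ec A (S - A))) (case (A, S - A) of (A, B) \<Rightarrow> tens (fb d A) (fb d B))"
      unfolding prod.case fb_Phi[OF fA gA] fb_Phi[OF fB gB] tens_Phi cmul_sum cmul_single
      by (simp add: G_def sum.cartesian_product split_def)
  qed
  finally show ?thesis .
qed


definition swp :: "nat \<Rightarrow> nat list \<Rightarrow> nat list" where
  "swp j w = take j w @ w ! Suc j # w ! j # drop (Suc (Suc j)) w"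

definition Mw :: "nat \<Rightarrow> word \<Rightarrow> word" where
  "Mw j w = take j w @ [w ! j + w ! Suc j] @ drop (Suc (Suc j)) w"

lemma decomp: "Suc j < length w \<Longrightarrow> w = take j w @ w ! j # w ! Suc j # drop (Suc (Suc j)) w"
  by (metis Cons_nth_drop_Suc Suc_lessD append_take_drop_id)

lemma swp_app: "length p = j \<Longrightarrow> swp j (p @ a # b # r) = p @ b # a # r"
  by (simp add: swp_def nth_append)

lemma Mw_app: "length p = j \<Longrightarrow> Mw j (L (p @ a # b # r)) = L p @ [{#a#} + {#b#}] @ L r"
  by (simp add: Mw_def nth_append take_L drop_L)

lemma inv_adj: "a \<noteq> b \<Longrightarrow> odd (ninv (p @ a # b # r) + ninv (p @ b # a # r))"
proof -
  assume ab: "a \<noteq> b"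
  have "E p (a # b # r) = E p (b # a # r)" by (simp add: E_Cons2)
  moreover have "ninv (a # b # r) + ninv (b # a # r) = (if b < a then 1 else 0) + (if a < b then 1 else 0)
     + 2 * (length (filter (\<lambda>y. y < a) r) + length (filter (\<lambda>y. y < b) r) + ninv r)"
    by simp
  moreover have "(if b < a then 1 else 0) + (if a < b then 1 else (0::nat)) = 1" using ab by auto
  ultimately have "ninv (p @ a # b # r) + ninv (p @ b # a # r) = 1 + 2 * (ninv p + E p (a # b # r)
     + length (filter (\<lambda>y. y < a) r) + length (filter (\<lambda>y. y < b) r) + ninv r)"
    by (simp only: inv_append) simp
  then show ?thesis by simp
qed

lemma bar_Phi:
  assumes fS: "finite S" and gS: "good d S"
  shows "bar d (Phi id S) = 0"
proof -
  define F where "F x = Poly_Mapping.single (Mw (snd x) (L (fst x))) (sg (ninv (fst x)) * sg (Suc (snd x)))"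
    for x :: "nat list \<times> nat"
  define T where "T = perms S \<times> {..<card S - 1}"
  define sig where "sig x = (swp (snd x) (fst x), snd x)" for x :: "nat list \<times> nat"
  have "bar d (Phi id S) = (\<Sum>w\<in>perms S. \<Sum>j\<in>{..<card S - 1}. F (w, j))"
    unfolding bar_def Phi_def lin_sum_single list.map_id
  proof (intro sum.cong refl)
    fix w assume w: "w \<in> perms S"
    then have lw: "length w = card S" by (rule perms_length)
    have gw: "good d (set (take (Suc j) w))" for j using w gS by (auto simp: perms_def good_def dest: in_set_takeD)
    show "cmul (sg (ninv w)) (barw d (L w)) = (\<Sum>j\<in>{..<card S - 1}. F (w, j))"
      unfolding barw_def cmul_sum length_L lw
    proof (intro sum.cong refl)
      fix j assume j: "j \<in> {..<card S - 1}"
      have jl: "Suc j < length w" using j lw by auto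
      then have "length (take (Suc j) w) = Suc j" by simp
      then have "(if even (wdeg d (take (Suc j) (L w))) then 1 else -1) = sg (Suc j)"
        using wdeg_L_parity[OF gw[of j]] unfolding take_L sg_def by presburger
      then show "cmul (sg (ninv w)) (cmul (if even (wdeg d (take (Suc j) (L w))) then 1 else -1)
          (Poly_Mapping.single (take j (L w) @ [L w ! j + L w ! Suc j] @ drop (Suc (Suc j)) (L w)) 1)) = F (w, j)"
        by (simp add: F_def Mw_def)
    qed
  qed
  also have "\<dots> = (\<Sum>x\<in>T. F x)" by (simp add: sum.cartesian_product T_def)
  finally have e1: "bar d (Phi id S) = (\<Sum>x\<in>T. F x)" .
  have key: "sig x \<in> T \<and> sig (sig x) = x \<and> F (sig x) = - F x" if x: "x \<in> T" for x
  proof -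
    obtain w j where xe: "x = (w, j)" by (cases x)
    have dw: "distinct w" and sw: "set w = S" and jl: "Suc j < length w"
      using x xe by (auto simp: T_def perms_def distinct_card)
    define p a b r where "p = take j w" and "a = w ! j" and "b = w ! Suc j" and "r = drop (Suc (Suc j)) w"
    have we: "w = p @ a # b # r" unfolding p_def a_def b_def r_def by (rule decomp[OF jl])
    have lp: "length p = j" using jl by (simp add: p_def)
    have ab: "a \<noteq> b" using dw we by auto
    have s1: "sig x = (p @ b # a # r, j)" using xe we lp by (simp add: sig_def swp_app)
    have "p @ b # a # r \<in> perms S" using dw sw we by (auto simp: perms_def)
    moreover have "sig (sig x) = x" using s1 xe we lp by (simp add: sig_def swp_app)
    moreover have "F (sig x) = - F x"
    proof -
      have "odd (ninv (p @ a # b # r) + ninv (p @ b # a # r))" using inv_adj[OF ab] .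
      then have "sg (ninv (p @ b # a # r)) = - sg (ninv (p @ a # b # r))" by (auto simp: sg_def)
      moreover have m1: "Mw j (L (p @ b # a # r)) = L p @ [{#b#} + {#a#}] @ L r" using Mw_app[OF lp] .
      moreover have m2: "Mw j (L (p @ a # b # r)) = L p @ [{#a#} + {#b#}] @ L r" using Mw_app[OF lp] .
      moreover have "F (sig x) = Poly_Mapping.single (L p @ [{#b#} + {#a#}] @ L r) (sg (ninv (p @ b # a # r)) * sg (Suc j))"
        unfolding F_def s1 prod.sel m1 ..
      moreover have "F x = Poly_Mapping.single (L p @ [{#a#} + {#b#}] @ L r) (sg (ninv (p @ a # b # r)) * sg (Suc j))"
        unfolding F_def xe prod.sel we[symmetric] m2[unfolded we[symmetric]] ..
      ultimately show ?thesis by (simp add: add.commute single_uminus)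
    qed
    ultimately show ?thesis using s1 x xe by (auto simp: T_def)
  qed
  have "(\<Sum>x\<in>T. F x) = (\<Sum>x\<in>T. - F x)"
    by (rule sum.reindex_bij_witness[where i = sig and j = sig]) (use key in auto)
  also have "\<dots> = - (\<Sum>x\<in>T. F x)" by (simp add: sum_negf)
  finally have "(\<Sum>x\<in>T. F x) = 0" by (rule poly_neg_self)
  then show ?thesis using e1 by simp
qed


lemma keys_Phi: "Poly_Mapping.keys (Phi \<pi> S) \<subseteq> (\<lambda>w. L (map \<pi> w)) ` perms S"
  unfolding Phi_def
  by (rule order_trans[OF keys_sum]) auto

lemma lookup_Phi_nil: "Poly_Mapping.lookup (Phi id S) [] = (if S = {} then 1 else 0)"
proof (cases "S = {}")
  case True then show ?thesis by (simp add: Phi_empty)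
next
  case False
  have "Poly_Mapping.lookup (Phi id S) [] = (\<Sum>w\<in>perms S. 0)"
    unfolding Phi_def lookup_sum
  proof (intro sum.cong refl)
    fix w assume "w \<in> perms S"
    then have "w \<noteq> []" using False by (auto simp: perms_def)
    then have "L (map id w) \<noteq> []" by (simp add: L_def)
    then show "Poly_Mapping.lookup (Poly_Mapping.single (L (map id w)) (sg (ninv w))) [] = 0"
      by (simp add: lookup_single when_def)
  qed
  then show ?thesis using False by simp
qed

lemma wedge_point:
  assumes fA: "finite A" and fB: "finite B" and g: "good d (A \<union> B)"
  shows "lin (fb d) (wedgeb A B) = lin2 (shw d) (fb d A) (fb d B)"
proof -
  have gA: "good d A" and gB: "good d B" using g by (auto simp: good_def)
  note eA = fb_Phi[OF fA gA] and eB = fb_Phi[OF fB gB]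
  show ?thesis
  proof (cases "A \<inter> B = {}")
    case False
    then have "wedgeb A B = 0" by (simp add: wedgeb_def)
    then show ?thesis unfolding eA eB using key_ovl[OF fA fB False g] by simp
  next
    case True
    have w: "wedgeb A B = Poly_Mapping.single (A \<union> B) (sg (ec A B))"
      using True by (simp add: wedgeb_def ec_def sg_def)
    have "lin2 (shw d) (Phi id A) (Phi id B) = cmul (sg (ec A B)) (Phi id (A \<union> B))"
      by (rule key_disj) (use fA fB True g in auto)
    moreover have "fb d (A \<union> B) = Phi id (A \<union> B)" using fA fB g by (intro fb_Phi) auto
    ultimately show ?thesis unfolding w eA eB by simp
  qed
qed

theorem lemma5p5:
  fixes n :: nat and d :: "nat \<Rightarrow> nat"
  assumes degs: "\<forall>i<n. even (d i) \<and> 0 < d i"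
  shows
    \<comment> \<open>f preserves degrees\<close>
    "(\<forall>S. S \<subseteq> {..<n} \<longrightarrow> (\<forall>w\<in>Poly_Mapping.keys (fb d S). wdeg d w = edeg d S))
     \<and> (\<forall>x y :: nat set \<Rightarrow>\<^sub>0 rat.
          Poly_Mapping.keys x \<subseteq> Pow {..<n} \<longrightarrow> Poly_Mapping.keys y \<subseteq> Pow {..<n} \<longrightarrow>
            \<comment> \<open>map of differential graded coalgebras\<close>
            bar d (fmap d x) = fmap d (dH x)
          \<and> deconc (fmap d x) = ftens d (coH d x)
          \<and> epsT (fmap d x) = epsH x
            \<comment> \<open>hence also a map of algebras (so of dg Hopf algebras)\<close>
          \<and> fmap d (wedge x y) = shuffle d (fmap d x) (fmap d y))
     \<and> fmap d (Poly_Mapping.single {} 1) = Poly_Mapping.single [] 1"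
proof -
  have sub: "finite S \<and> good d S" if "S \<subseteq> {..<n}" for S
    using that degs finite_subset[OF that] by (auto simp: good_def)
  have P1: "\<forall>S. S \<subseteq> {..<n} \<longrightarrow> (\<forall>w\<in>Poly_Mapping.keys (fb d S). wdeg d w = edeg d S)"
  proof (intro allI impI ballI)
    fix S w assume S: "S \<subseteq> {..<n}" and w: "w \<in> Poly_Mapping.keys (fb d S)"
    have fS: "finite S" and gS: "good d S" using sub[OF S] by auto
    have "w \<in> (\<lambda>w. L (map id w)) ` perms S" using w keys_Phi[of id S] fb_Phi[OF fS gS] by auto
    then obtain u where u: "u \<in> perms S" and wu: "w = L u" by auto
    have "wdeg d w = sum_list (map (\<lambda>i. d i - 1) u)" unfolding wu by (rule wdeg_L)
    also have "\<dots> = (\<Sum>i\<in>set u. d i - 1)" using u by (simp add: perms_def sum_list_distinct_conv_sum_set)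
    also have "\<dots> = edeg d S" using u by (simp add: perms_def edeg_def)
    finally show "wdeg d w = edeg d S" .
  qed
  have P2: "bar d (fmap d x) = fmap d (dH x)
          \<and> deconc (fmap d x) = ftens d (coH d x)
          \<and> epsT (fmap d x) = epsH x
          \<and> fmap d (wedge x y) = shuffle d (fmap d x) (fmap d y)"
    if kx: "Poly_Mapping.keys x \<subseteq> Pow {..<n}" and ky: "Poly_Mapping.keys y \<subseteq> Pow {..<n}"
    for x y :: "nat set \<Rightarrow>\<^sub>0 rat"
  proof (intro conjI)
    have sx: "finite S \<and> good d S" if "S \<in> Poly_Mapping.keys x" for S using that kx sub by auto
    have sy: "finite S \<and> good d S" if "S \<in> Poly_Mapping.keys y" for S using that ky sub by auto
    have "bar d (fmap d x) = lin (\<lambda>S. bar d (fb d S)) x"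
      unfolding bar_def fmap_def lin_comp ..
    also have "\<dots> = 0"
      by (rule lin_lin_zero) (use sx fb_Phi bar_Phi in auto)
    finally show "bar d (fmap d x) = fmap d (dH x)" by (simp add: dH_def fmap_def)
    have "deconc (fmap d x) = lin (\<lambda>S. deconc (fb d S)) x"
      unfolding deconc_def fmap_def lin_comp ..
    also have "\<dots> = lin (\<lambda>S. ftens d (coHb d S)) x"
      by (rule lin_cong) (use sx fb_Phi deconc_Phi coHb_coS in auto)
    also have "\<dots> = ftens d (coH d x)"
      unfolding ftens_def coH_def lin_comp ..
    finally show "deconc (fmap d x) = ftens d (coH d x)" .
    have "epsT (fmap d x) = (\<Sum>S\<in>Poly_Mapping.keys x. Poly_Mapping.lookup x S * Poly_Mapping.lookup (fb d S) [])"
      unfolding epsT_def fmap_def lookup_lin ..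
    also have "\<dots> = (\<Sum>S\<in>Poly_Mapping.keys x. if S = {} then Poly_Mapping.lookup x S else 0)"
      by (rule sum.cong) (use sx fb_Phi lookup_Phi_nil in auto)
    also have "\<dots> = epsH x"
      by (simp add: epsH_def in_keys_iff)
    finally show "epsT (fmap d x) = epsH x" .
    have "fmap d (wedge x y) = lin (\<lambda>A. lin (\<lambda>B. lin (fb d) (wedgeb A B)) y) x"
      unfolding fmap_def wedge_def lin2_lin lin_comp ..
    also have "\<dots> = lin (\<lambda>A. lin (\<lambda>B. lin2 (shw d) (fb d A) (fb d B)) y) x"
    proof (rule lin_cong)
      fix A assume A: "A \<in> Poly_Mapping.keys x"
      show "lin (\<lambda>B. lin (fb d) (wedgeb A B)) y = lin (\<lambda>B. lin2 (shw d) (fb d A) (fb d B)) y"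
      proof (rule lin_cong)
        fix B assume B: "B \<in> Poly_Mapping.keys y"
        have "A \<union> B \<subseteq> {..<n}" using A B kx ky by auto
        then have "good d (A \<union> B)" using sub by auto
        then show "lin (fb d) (wedgeb A B) = lin2 (shw d) (fb d A) (fb d B)"
          using sx[OF A] sy[OF B] by (intro wedge_point) auto
      qed
    qed
    also have "\<dots> = shuffle d (fmap d x) (fmap d y)"
    proof -
      have inner: "lin2 (shw d) Q (lin (fb d) y) = lin (\<lambda>B. lin2 (shw d) Q (fb d B)) y" for Q
        unfolding lin2_lin'[of "shw d" Q] lin_comp ..
      have "shuffle d (fmap d x) (fmap d y) = lin2 (shw d) (lin (fb d) x) (lin (fb d) y)"
        by (simp only: shuffle_def fmap_def)
      also have "\<dots> = lin (\<lambda>a. lin (shw d a) (lin (fb d) y)) (lin (fb d) x)" by (rule lin2_lin)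
      also have "\<dots> = lin (\<lambda>A. lin (\<lambda>a. lin (shw d a) (lin (fb d) y)) (fb d A)) x" by (rule lin_comp)
      also have "\<dots> = lin (\<lambda>A. lin2 (shw d) (fb d A) (lin (fb d) y)) x" by (simp only: lin2_lin)
      finally have "shuffle d (fmap d x) (fmap d y) = lin (\<lambda>A. lin2 (shw d) (fb d A) (lin (fb d) y)) x" .
      then show ?thesis unfolding inner by simp
    qed
    finally show "fmap d (wedge x y) = shuffle d (fmap d x) (fmap d y)" .
  qed
  have P3: "fmap d (Poly_Mapping.single {} 1) = Poly_Mapping.single [] 1"
    by (simp add: fmap_def fb_def)
  show ?thesis using P1 P2 P3 by blast
qed


end
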